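(* Let $r\ge0$, $p\in\mathcal{P}_r$, and let $\mathcal{S}\subseteq\mathcal{HC}^*(p)$ be a subset with exactly $\kappa_p$ elements. Then there exists a cycle structure set $\sigma$ for $p$ such that each pair in $\sigma$ contains exactly one element of $\mathcal{S}$.
   Context: A partition $p=(p_1\ge\dots\ge p_k>0)$ is identified with its Young diagram $Y_p$ (rows numbered from the top, columns from the left, starting at $1$); $s_{ij}$ denotes the square in row $i$, column $j$ (possibly outside $Y_p$). Rank: repeatedly removing from a Young diagram a domino (two adjacent squares) so that a Young diagram remains ends at the staircase $(r,r-1,\dots,1)$ for a unique $r\ge0$; $r$ is the rank of $p$ and $\mathcal{P}_r$ is the set of partitions of rank $r$. For $p\in\mathcal{P}_r$: $\mathcal{HC}(p)$ is the set of squares $s_{ij}$ with $i+j\equiv r\pmod2$, $i+j>r+1$, such that adding $s_{ij}$ to $Y_p$ or removing $s_{ij}$ from $Y_p$ yields a Young diagram; $\mathcal{C}(p)$ (resp. $\mathcal{H}(p)$) consists of those with $i$ odd (resp. even). $\mathcal{HC}^*(p),\mathcal{C}^*(p),\mathcal{H}^*(p)$ are defined the same way with $i+j>r+2$ in place of $i+j>r+1$. A square of $\mathcal{HC}(p)$ is filled if it lies in $Y_p$. $\gamma_p$ is the number of squares $s_{ij}\in Y_p$ with $i+j=r+2$; $\kappa_p$ is the number of filled squares of $\mathcal{HC}(p)$. A square $s_{mn}$ lies between $s_{ij}$ and $s_{kl}$ iff $m$ is between $i$ and $k$ and $n$ between $j$ and $l$ (inclusive). A cycle structure set for $p$ is a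 set $\sigma$ of pairwise disjoint unordered pairs $\{a,b\}$ with $a\in\mathcal{H}^*(p)$, $b\in\mathcal{C}^*(p)$ such that (1) exactly $\gamma_p$ squares of $\mathcal{HC}^*(p)$ lie in no pair of $\sigma$, and (2) for every $\{a,b\}\in\sigma$, every square $c\in\mathcal{HC}^*(p)$ lying between $a$ and $b$ is paired in $\sigma$ with another square lying between $a$ and $b$. *)

theory Defs
  imports Main
begin

type_synonym square = "nat \<times> nat"  (* (row i, column j), both starting at 1 *)

definition is_partition :: "nat list \<Rightarrow> bool" where
  "is_partition p \<longleftrightarrow> sorted_wrt (\<ge>) p \<and> (\<forall>x\<in>set p. 0 < x)"

definition Y :: "nat list \<Rightarrow> square set" where
  "Y p = {(i, j). 1 \<le> i \<and> i \<le> length p \<and> 1 \<le> j \<and> j \<le> p ! (i - 1)}"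

definition young :: "square set \<Rightarrow> bool" where
  "young D \<longleftrightarrow> finite D \<and> (\<forall>(i, j)\<in>D. 1 \<le> i \<and> 1 \<le> j) \<and>
     (\<forall>i j i' j'. (i, j) \<in> D \<and> 1 \<le> i' \<and> i' \<le> i \<and> 1 \<le> j' \<and> j' \<le> j \<longrightarrow> (i', j') \<in> D)"

definition adjacent :: "square \<Rightarrow> square \<Rightarrow> bool" where
  "adjacent a b \<longleftrightarrow>
     (fst a = fst b \<and> (snd a = snd b + 1 \<or> snd b = snd a + 1)) \<or>
     (snd a = snd b \<and> (fst a = fst b + 1 \<or> fst b = fst a + 1))"

definition domino_step :: "square set \<Rightarrow> square set \<Rightarrow> bool" where
  "domino_step D D' \<longleftrightarrow>
     (\<exists>a b. a \<in> D \<and> b \<in> D \<and> adjacent a b \<and> D' = D - {a, b} \<and> young D')"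

definition staircase :: "nat \<Rightarrow> square set" where
  "staircase r = {(i, j). 1 \<le> i \<and> 1 \<le> j \<and> i + j \<le> r + 1}"

definition in_P :: "nat \<Rightarrow> nat list \<Rightarrow> bool" where
  "in_P r p \<longleftrightarrow> is_partition p \<and> domino_step\<^sup>*\<^sup>* (Y p) (staircase r)"

definition addrem :: "nat list \<Rightarrow> square \<Rightarrow> bool" where
  "addrem p s \<longleftrightarrow> (s \<notin> Y p \<and> young (insert s (Y p))) \<or> (s \<in> Y p \<and> young (Y p - {s}))"

definition HC :: "nat \<Rightarrow> nat list \<Rightarrow> square set" where
  "HC r p = {(i, j). 1 \<le> i \<and> 1 \<le> j \<and> (i + j) mod 2 = r mod 2 \<and> i + j > r + 1 \<and> addrem p (i, j)}"

definition HCs :: "nat \<Rightarrow> nat list \<Rightarrow> square set" where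
  "HCs r p = {(i, j). 1 \<le> i \<and> 1 \<le> j \<and> (i + j) mod 2 = r mod 2 \<and> i + j > r + 2 \<and> addrem p (i, j)}"

definition Cs :: "nat \<Rightarrow> nat list \<Rightarrow> square set" where
  "Cs r p = {s \<in> HCs r p. odd (fst s)}"

definition Hs :: "nat \<Rightarrow> nat list \<Rightarrow> square set" where
  "Hs r p = {s \<in> HCs r p. even (fst s)}"

definition gamma :: "nat \<Rightarrow> nat list \<Rightarrow> nat" where
  "gamma r p = card {(i, j). (i, j) \<in> Y p \<and> i + j = r + 2}"

definition kappa :: "nat \<Rightarrow> nat list \<Rightarrow> nat" where
  "kappa r p = card (HC r p \<inter> Y p)"

definition between :: "square \<Rightarrow> square \<Rightarrow> square \<Rightarrow> bool" where
  "between c a b \<longleftrightarrow>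
     min (fst a) (fst b) \<le> fst c \<and> fst c \<le> max (fst a) (fst b) \<and>
     min (snd a) (snd b) \<le> snd c \<and> snd c \<le> max (snd a) (snd b)"

definition cycle_structure_set :: "nat \<Rightarrow> nat list \<Rightarrow> square set set \<Rightarrow> bool" where
  "cycle_structure_set r p \<sigma> \<longleftrightarrow>
     (\<forall>P\<in>\<sigma>. \<exists>a b. P = {a, b} \<and> a \<in> Hs r p \<and> b \<in> Cs r p) \<and>
     (\<forall>P\<in>\<sigma>. \<forall>Q\<in>\<sigma>. P \<noteq> Q \<longrightarrow> P \<inter> Q = {}) \<and>
     card (HCs r p - \<Union>\<sigma>) = gamma r p \<and>
     (\<forall>a b. {a, b} \<in> \<sigma> \<longrightarrow>
        (\<forall>c\<in>HCs r p. between c a b \<longrightarrow>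
           (\<exists>d. d \<noteq> c \<and> {c, d} \<in> \<sigma> \<and> between d a b)))"

end

theory Submission
  imports Defs
begin


definition addable :: "square set \<Rightarrow> square \<Rightarrow> bool" where
  "addable D c \<longleftrightarrow> c \<notin> D \<and> young (insert c D)"
definition removable :: "square set \<Rightarrow> square \<Rightarrow> bool" where
  "removable D c \<longleftrightarrow> c \<in> D \<and> young (D - {c})"

lemma young_finite: "young D \<Longrightarrow> finite D" by (simp add: young_def)

lemma young_pos: "young D \<Longrightarrow> (i, j) \<in> D \<Longrightarrow> 1 \<le> i \<and> 1 \<le> j"
  unfolding young_def by blast

lemma young_down: "young D \<Longrightarrow> (i, j) \<in> D \<Longrightarrow> 1 \<le> i' \<Longrightarrow> i' \<le> i \<Longrightarrow> 1 \<le> j' \<Longrightarrow> j' \<le> j \<Longrightarrow> (i', j') \<in> D"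
  unfolding young_def by blast

lemma addable_iff:
  assumes "young D"
  shows "addable D (i, j) \<longleftrightarrow> (i, j) \<notin> D \<and> 1 \<le> i \<and> 1 \<le> j \<and>
      (i = 1 \<or> (i - 1, j) \<in> D) \<and> (j = 1 \<or> (i, j - 1) \<in> D)"
proof
  assume a: "addable D (i, j)"
  then have y: "young (insert (i,j) D)" and n: "(i,j) \<notin> D" by (auto simp: addable_def)
  have p: "1 \<le> i" "1 \<le> j" using young_pos[OF y, of i j] by auto
  have "i = 1 \<or> (i - 1, j) \<in> D"
  proof (cases "i = 1")
    case False
    then have "(i - 1, j) \<in> insert (i,j) D" using young_down[OF y, of i j "i-1" j] p by auto
    then show ?thesis using False p by auto
  qed simp
  moreover have "j = 1 \<or> (i, j - 1) \<in> D"
  proof (cases "j = 1")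
    case False
    then have "(i, j - 1) \<in> insert (i,j) D" using young_down[OF y, of i j i "j-1"] p by auto
    then show ?thesis using False p by auto
  qed simp
  ultimately show "(i, j) \<notin> D \<and> 1 \<le> i \<and> 1 \<le> j \<and>
      (i = 1 \<or> (i - 1, j) \<in> D) \<and> (j = 1 \<or> (i, j - 1) \<in> D)" using n p by auto
next
  assume h: "(i, j) \<notin> D \<and> 1 \<le> i \<and> 1 \<le> j \<and>
      (i = 1 \<or> (i - 1, j) \<in> D) \<and> (j = 1 \<or> (i, j - 1) \<in> D)"
  have "young (insert (i,j) D)"
    unfolding young_def
  proof (intro conjI allI impI)
    show "finite (insert (i, j) D)" using young_finite[OF assms] by simp
    show "\<forall>(a, b)\<in>insert (i, j) D. 1 \<le> a \<and> 1 \<le> b" using h young_pos[OF assms] by auto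
    fix a b a' b'
    assume q: "(a, b) \<in> insert (i, j) D \<and> 1 \<le> a' \<and> a' \<le> a \<and> 1 \<le> b' \<and> b' \<le> b"
    show "(a', b') \<in> insert (i, j) D"
    proof (cases "(a,b) \<in> D")
      case True then show ?thesis using young_down[OF assms True] q by auto
    next
      case False
      then have ab: "a = i" "b = j" using q by auto
      show ?thesis
      proof (cases "a' = i \<and> b' = j")
        case True then show ?thesis by simp
      next
        case False
        then have "a' < i \<or> b' < j" using q ab by auto
        then show ?thesis
        proof
          assume "a' < i"
          then have "(i - 1, j) \<in> D" using h q by auto
          then show ?thesis using young_down[OF assms, of "i-1" j a' b'] q ab \<open>a' < i\<close> by auto
        next
          assume "b' < j"
          then have "(i, j - 1) \<in> D" using h q by auto
          then show ?thesis using young_down[OF assms, of i "j-1" a' b'] q ab \<open>b' < j\<close> by auto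
        qed
      qed
    qed
  qed
  then show "addable D (i, j)" using h by (simp add: addable_def)
qed

lemma removable_iff:
  assumes "young D"
  shows "removable D (i, j) \<longleftrightarrow> (i, j) \<in> D \<and> (i + 1, j) \<notin> D \<and> (i, j + 1) \<notin> D"
proof
  assume a: "removable D (i, j)"
  then have y: "young (D - {(i,j)})" and m: "(i,j) \<in> D" by (auto simp: removable_def)
  have p: "1 \<le> i" "1 \<le> j" using young_pos[OF assms m] by auto
  have "(i+1, j) \<notin> D"
  proof
    assume "(i+1,j) \<in> D"
    then have "(i+1,j) \<in> D - {(i,j)}" by simp
    from young_down[OF y this, of i j] p show False by auto
  qed
  moreover have "(i, j+1) \<notin> D"
  proof
    assume "(i,j+1) \<in> D"
    then have "(i,j+1) \<in> D - {(i,j)}" by simp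
    from young_down[OF y this, of i j] p show False by auto
  qed
  ultimately show "(i, j) \<in> D \<and> (i + 1, j) \<notin> D \<and> (i, j + 1) \<notin> D" using m by simp
next
  assume h: "(i, j) \<in> D \<and> (i + 1, j) \<notin> D \<and> (i, j + 1) \<notin> D"
  have "young (D - {(i,j)})"
    unfolding young_def
  proof (intro conjI allI impI)
    show "finite (D - {(i, j)})" using young_finite[OF assms] by simp
    show "\<forall>(a, b)\<in>D - {(i, j)}. 1 \<le> a \<and> 1 \<le> b" using young_pos[OF assms] by auto
    fix a b a' b'
    assume q: "(a, b) \<in> D - {(i, j)} \<and> 1 \<le> a' \<and> a' \<le> a \<and> 1 \<le> b' \<and> b' \<le> b"
    have "(a', b') \<in> D" using young_down[OF assms, of a b a' b'] q by auto
    moreover have "(a', b') \<noteq> (i, j)"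
    proof
      assume e: "(a', b') = (i, j)"
      have "a > i \<or> b > j" using q e by auto
      then show False
      proof
        assume "a > i"
        then have "(i+1, j) \<in> D" using young_down[OF assms, of a b "i+1" j] q e by auto
        then show False using h by simp
      next
        assume "b > j"
        then have "(i, j+1) \<in> D" using young_down[OF assms, of a b i "j+1"] q e by auto
        then show False using h by simp
      qed
    qed
    ultimately show "(a', b') \<in> D - {(i, j)}" by simp
  qed
  then show "removable D (i, j)" using h by (simp add: removable_def)
qed

lemma addrem_eq: "addrem p s \<longleftrightarrow> addable (Y p) s \<or> removable (Y p) s"
  by (auto simp: addrem_def addable_def removable_def)



definition AD :: "nat \<Rightarrow> square set" where
  "AD n = {(i, j). 1 \<le> i \<and> 1 \<le> j \<and> i + j = n}"

lemma AD_eq: "AD n = (\<lambda>i. (i, n - i)) ` {1..n - 1}"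
  unfolding AD_def by (auto simp: image_iff)

lemma card_AD: "card (AD n) = n - 1"
proof -
  have "inj_on (\<lambda>i. (i, n - i)) {1..n - 1}" by (auto simp: inj_on_def)
  then show ?thesis by (simp add: AD_eq card_image)
qed

lemma finite_AD: "finite (AD n)" by (simp add: AD_eq)

lemma young_stair: "young (staircase r)"
  unfolding young_def staircase_def
proof (intro conjI)
  show "finite {(i, j). 1 \<le> i \<and> 1 \<le> j \<and> i + j \<le> r + 1}"
    by (rule finite_subset[of _ "{0..r+1} \<times> {0..r+1}"]) auto
qed auto

lemma stair_mem: "(i, j) \<in> staircase r \<longleftrightarrow> 1 \<le> i \<and> 1 \<le> j \<and> i + j \<le> r + 1"
  by (simp add: staircase_def)

lemma addable_stair: "addable (staircase r) c \<longleftrightarrow> c \<in> AD (r + 2)"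
proof -
  obtain i j where c: "c = (i,j)" by (cases c)
  show ?thesis unfolding c addable_iff[OF young_stair] stair_mem AD_def by auto
qed

lemma removable_stair: "removable (staircase r) (i, j) \<Longrightarrow> i + j = r + 1"
  unfolding removable_iff[OF young_stair] stair_mem by auto

definition lam :: "nat list \<Rightarrow> nat \<Rightarrow> nat" where
  "lam p t = (if 1 \<le> t \<and> t \<le> length p then p ! (t - 1) else 0)"

lemma Y_iff: "(i, j) \<in> Y p \<longleftrightarrow> 1 \<le> i \<and> 1 \<le> j \<and> j \<le> lam p i"
  unfolding Y_def lam_def by auto

lemma lam_mono:
  assumes "is_partition p" "1 \<le> t" "t \<le> t'"
  shows "lam p t' \<le> lam p t"
proof (cases "t' \<le> length p")
  case True
  show ?thesis
  proof (cases "t = t'")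
    case False
    then have "t - 1 < t' - 1" using assms by auto
    moreover have "t' - 1 < length p" using True assms by auto
    ultimately have "p ! (t' - 1) \<le> p ! (t - 1)"
      using sorted_wrt_nth_less[of "(\<ge>)" p "t-1" "t'-1"] assms(1) by (auto simp: is_partition_def)
    then show ?thesis using True assms by (simp add: lam_def)
  qed simp
next
  case False
  then show ?thesis by (simp add: lam_def)
qed

lemma young_Y:
  assumes "is_partition p"
  shows "young (Y p)"
  unfolding young_def
proof (intro conjI allI impI)
  have "Y p \<subseteq> {0..length p} \<times> {0..sum_list p}"
  proof
    fix x assume "x \<in> Y p"
    then obtain i j where x: "x = (i,j)" "1 \<le> i" "i \<le> length p" "1 \<le> j" "j \<le> p ! (i - 1)"
      by (auto simp: Y_def)
    then have "p ! (i - 1) \<in> set p" by auto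
    then have "p ! (i - 1) \<le> sum_list p" by (rule member_le_sum_list) auto
    then show "x \<in> {0..length p} \<times> {0..sum_list p}" using x by auto
  qed
  then show "finite (Y p)" by (rule finite_subset) auto
  show "\<forall>(i, j)\<in>Y p. 1 \<le> i \<and> 1 \<le> j" by (auto simp: Y_def)
  fix i j i' j'
  assume h: "(i, j) \<in> Y p \<and> 1 \<le> i' \<and> i' \<le> i \<and> 1 \<le> j' \<and> j' \<le> j"
  then have "j \<le> lam p i" "1 \<le> i" by (auto simp: Y_iff)
  moreover have "lam p i \<le> lam p i'" using lam_mono[OF assms, of i' i] h by auto
  ultimately show "(i', j') \<in> Y p" using h by (auto simp: Y_iff)
qed



definition cls :: "nat \<Rightarrow> square \<Rightarrow> bool" where
  "cls r c \<longleftrightarrow> (fst c + snd c) mod 2 = r mod 2"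

definition AC :: "nat \<Rightarrow> square set \<Rightarrow> square set" where
  "AC r D = {c. addable D c \<and> cls r c}"
definition RC :: "nat \<Rightarrow> square set \<Rightarrow> square set" where
  "RC r D = {c. removable D c \<and> cls r c}"
definition Phi :: "nat \<Rightarrow> square set \<Rightarrow> int" where
  "Phi r D = int (card (AC r D)) - int (card (RC r D))"

lemma cls_Suc1: "cls r (Suc a, b) \<longleftrightarrow> \<not> cls r (a, b)"
  unfolding cls_def by auto presburger+
lemma cls_Suc2: "cls r (a, Suc b) \<longleftrightarrow> \<not> cls r (a, b)"
  unfolding cls_def by auto presburger+
lemma cls_pred1: "1 \<le> a \<Longrightarrow> cls r (a - 1, b) \<longleftrightarrow> \<not> cls r (a, b)"
  using cls_Suc1[of r "a - 1" b] by simp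
lemma cls_pred2: "1 \<le> b \<Longrightarrow> cls r (a, b - 1) \<longleftrightarrow> \<not> cls r (a, b)"
  using cls_Suc2[of r a "b - 1"] by simp

lemma finite_RC: "young D \<Longrightarrow> finite (RC r D)"
  by (rule finite_subset[of _ D]) (auto simp: RC_def removable_def young_def)

lemma finite_AC:
  assumes "young D" shows "finite (AC r D)"
proof (rule finite_subset)
  show "AC r D \<subseteq> insert (1,1) ((\<lambda>(i,j). (i+1,j)) ` D \<union> (\<lambda>(i,j). (i,j+1)) ` D)"
  proof
    fix c assume "c \<in> AC r D"
    then obtain i j where c: "c = (i,j)" and a: "addable D (i,j)" by (cases c) (auto simp: AC_def)
    from a[unfolded addable_iff[OF assms]] have h: "1 \<le> i" "1 \<le> j" "i = 1 \<or> (i - 1, j) \<in> D" "j = 1 \<or> (i, j - 1) \<in> D" by auto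
    show "c \<in> insert (1,1) ((\<lambda>(i,j). (i+1,j)) ` D \<union> (\<lambda>(i,j). (i,j+1)) ` D)"
    proof (cases "i = 1")
      case True
      show ?thesis
      proof (cases "j = 1")
        case False
        then have "(i, j-1) \<in> D" using h by auto
        then have "(i,j) \<in> (\<lambda>(i,j). (i,j+1)) ` D" using h by (auto simp: image_iff intro!: bexI[of _ "(i,j-1)"])
        then show ?thesis using c by auto
      qed (use True c in auto)
    next
      case False
      then have "(i-1, j) \<in> D" using h by auto
      then have "(i,j) \<in> (\<lambda>(i,j). (i+1,j)) ` D" using h by (auto simp: image_iff intro!: bexI[of _ "(i-1,j)"])
      then show ?thesis using c by auto
    qed
  qed
  show "finite (insert (1,1) ((\<lambda>(i,j). (i+1,j)) ` D \<union> (\<lambda>(i,j). (i,j+1)) ` D))"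
    using young_finite[OF assms] by simp
qed

lemma addable_insert:
  assumes y: "young D" and s: "addable D (i, j)"
  shows "addable (insert (i,j) D) (a, b) \<longleftrightarrow>
     (addable D (a, b) \<and> (a, b) \<noteq> (i, j)) \<or>
     ((a, b) = (i + 1, j) \<and> (j = 1 \<or> (i + 1, j - 1) \<in> D)) \<or>
     ((a, b) = (i, j + 1) \<and> (i = 1 \<or> (i - 1, j + 1) \<in> D))"
proof -
  have y': "young (insert (i,j) D)" using s by (simp add: addable_def)
  have si: "(i,j) \<notin> D" "1 \<le> i" "1 \<le> j" using s[unfolded addable_iff[OF y]] by auto
  have n1: "(i+1, j) \<notin> D" using young_down[OF y, of "i+1" j i j] si by auto
  have n2: "(i, j+1) \<notin> D" using young_down[OF y, of i "j+1" i j] si by auto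
  show ?thesis
    unfolding addable_iff[OF y'] addable_iff[OF y]
    using si n1 n2 by auto
qed

lemma removable_insert:
  assumes y: "young D" and s: "addable D (i, j)"
  shows "removable (insert (i,j) D) (a, b) \<longleftrightarrow>
     (removable D (a, b) \<and> (a, b) \<noteq> (i - 1, j) \<and> (a, b) \<noteq> (i, j - 1)) \<or> (a, b) = (i, j)"
proof -
  have y': "young (insert (i,j) D)" using s by (simp add: addable_def)
  have si: "(i,j) \<notin> D" "1 \<le> i" "1 \<le> j" using s[unfolded addable_iff[OF y]] by auto
  have n1: "(i+1, j) \<notin> D" using young_down[OF y, of "i+1" j i j] si by auto
  have n2: "(i, j+1) \<notin> D" using young_down[OF y, of i "j+1" i j] si by auto
  show ?thesis
    unfolding removable_iff[OF y'] removable_iff[OF y]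
    using si n1 n2 by auto
qed

lemma Phi_insert:
  assumes y: "young D" and s: "addable D (i, j)"
  shows "Phi r (insert (i,j) D) = Phi r D + (if cls r (i,j) then -2 else 2)"
proof -
  let ?D' = "insert (i,j) D"
  have y': "young ?D'" using s by (simp add: addable_def)
  have si: "(i,j) \<notin> D" "1 \<le> i" "1 \<le> j" using s[unfolded addable_iff[OF y]] by auto
  have pos: "\<And>a b. (a,b) \<in> D \<Longrightarrow> 1 \<le> a \<and> 1 \<le> b" using young_pos[OF y] by blast
  have fA: "finite (AC r D)" "finite (AC r ?D')" using finite_AC y y' by auto
  have fR: "finite (RC r D)" "finite (RC r ?D')" using finite_RC y y' by auto
  show ?thesis
  proof (cases "cls r (i,j)")
    case True
    have c1: "\<not> cls r (i+1, j)" "\<not> cls r (i, j+1)" "\<not> cls r (i-1, j)" "\<not> cls r (i, j-1)"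
      using True si cls_Suc1 cls_Suc2 cls_pred1 cls_pred2 by auto
    have A: "AC r ?D' = AC r D - {(i,j)}"
    proof -
      have "\<And>a b. (a,b) \<in> AC r ?D' \<longleftrightarrow> (a,b) \<in> AC r D - {(i,j)}"
        unfolding AC_def using addable_insert[OF y s] c1 by auto
      then show ?thesis by auto
    qed
    have R: "RC r ?D' = insert (i,j) (RC r D)"
    proof -
      have "\<And>a b. (a,b) \<in> RC r ?D' \<longleftrightarrow> (a,b) \<in> insert (i,j) (RC r D)"
        unfolding RC_def using removable_insert[OF y s] c1 True by auto
      then show ?thesis by auto
    qed
    have "(i,j) \<in> AC r D" using s True by (simp add: AC_def)
    moreover have "(i,j) \<notin> RC r D" using si by (simp add: RC_def removable_def)
    ultimately have "card (AC r ?D') = card (AC r D) - 1" "card (RC r ?D') = card (RC r D) + 1"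
      "card (AC r D) \<ge> 1"
      using A R fA fR by (auto simp: card_gt_0_iff Suc_le_eq)
    then show ?thesis using True by (simp add: Phi_def)
  next
    case False
    have c1: "cls r (i+1, j)" "cls r (i, j+1)" "cls r (i-1, j)" "cls r (i, j-1)"
      using False si cls_Suc1 cls_Suc2 cls_pred1 cls_pred2 by auto
    define P1 where "P1 \<longleftrightarrow> (i = 1 \<or> (i - 1, j + 1) \<in> D)"
    define P2 where "P2 \<longleftrightarrow> (j = 1 \<or> (i + 1, j - 1) \<in> D)"
    define X where "X = (if P1 then {(i, j+1)} else {}) \<union> (if P2 then {(i+1, j)} else {})"
    define Z where "Z = (if P1 then {} else {(i - 1, j)}) \<union> (if P2 then {} else {(i, j - 1)})"
    have A: "AC r ?D' = AC r D \<union> X"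
    proof -
      have "\<And>a b. (a,b) \<in> AC r ?D' \<longleftrightarrow> (a,b) \<in> AC r D \<union> X"
        unfolding AC_def X_def P1_def P2_def using addable_insert[OF y s] c1 False by auto
      then show ?thesis by auto
    qed
    have AX: "AC r D \<inter> X = {}"
      unfolding AC_def X_def using addable_iff[OF y] si by auto
    have rem1: "removable D (i-1, j) \<longleftrightarrow> \<not> P1"
      unfolding P1_def removable_iff[OF y] using s[unfolded addable_iff[OF y]] si by (auto dest: pos)
    have rem2: "removable D (i, j-1) \<longleftrightarrow> \<not> P2"
      unfolding P2_def removable_iff[OF y] using s[unfolded addable_iff[OF y]] si by (auto dest: pos)
    have R: "RC r D = RC r ?D' \<union> Z"
    proof -
      have "\<And>a b. (a,b) \<in> RC r D \<longleftrightarrow> (a,b) \<in> RC r ?D' \<union> Z"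
        unfolding RC_def Z_def using removable_insert[OF y s] c1 False rem1 rem2 by auto
      then show ?thesis by auto
    qed
    have RZ: "RC r ?D' \<inter> Z = {}"
      unfolding RC_def Z_def using removable_insert[OF y s] si by auto
    have fX: "finite X" "finite Z" by (auto simp: X_def Z_def)
    have cX: "card X + card Z = 2"
      using si by (cases P1; cases P2) (auto simp: X_def Z_def)
    have "card (AC r ?D') = card (AC r D) + card X" using A AX fA fX by (simp add: card_Un_disjoint)
    moreover have "card (RC r D) = card (RC r ?D') + card Z" using R RZ fR fX by (simp add: card_Un_disjoint)
    ultimately show ?thesis using False cX by (simp add: Phi_def)
  qed
qed



lemma adjacent_sym: "adjacent a b \<longleftrightarrow> adjacent b a"
  unfolding adjacent_def by auto

lemma adjacent_cases:
  assumes "adjacent (i, j) e"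
  shows "e = (i - 1, j) \<and> i \<ge> 1 \<or> e = (i + 1, j) \<or> e = (i, j - 1) \<and> j \<ge> 1 \<or> e = (i, j + 1)"
  using assms unfolding adjacent_def by (cases e) auto

lemma domino_ordered:
  assumes yD: "young D" and yD': "young D'" and D': "D' = D - {u, v}" and u: "u \<in> D" and v: "v \<in> D"
    and uv: "v = (fst u + 1, snd u) \<or> v = (fst u, snd u + 1)"
  shows "addable D' u \<and> addable (insert u D') v \<and> insert v (insert u D') = D \<and> (cls r u \<longleftrightarrow> \<not> cls r v)"
proof -
  obtain i j where ui: "u = (i, j)" by (cases u)
  have pu: "1 \<le> i" "1 \<le> j" using young_pos[OF yD] u ui by auto
  have au: "addable D' u"
    unfolding ui addable_iff[OF yD']
  proof (intro conjI)
    show "(i, j) \<notin> D'" using D' ui by simp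
    show "i = 1 \<or> (i - 1, j) \<in> D'"
    proof (cases "i = 1")
      case False
      then have "(i - 1, j) \<in> D" using young_down[OF yD, of i j "i - 1" j] u ui pu by auto
      then show ?thesis using D' ui uv False pu by auto
    qed simp
    show "j = 1 \<or> (i, j - 1) \<in> D'"
    proof (cases "j = 1")
      case False
      then have "(i, j - 1) \<in> D" using young_down[OF yD, of i j i "j - 1"] u ui pu by auto
      then show ?thesis using D' ui uv False pu by auto
    qed simp
  qed (use pu in auto)
  have yD'': "young (insert u D')" using au by (simp add: addable_def)
  obtain a b where vi: "v = (a, b)" by (cases v)
  have pv: "1 \<le> a" "1 \<le> b" using young_pos[OF yD] v vi by auto
  have av: "addable (insert u D') v"
    unfolding vi addable_iff[OF yD'']
  proof (intro conjI)
    show "(a, b) \<notin> insert u D'" using D' vi ui uv by auto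
    show "a = 1 \<or> (a - 1, b) \<in> insert u D'"
    proof (cases "a = 1")
      case False
      then have "(a - 1, b) \<in> D" using young_down[OF yD, of a b "a - 1" b] v vi pv by auto
      then show ?thesis using D' ui vi uv False pv by auto
    qed simp
    show "b = 1 \<or> (a, b - 1) \<in> insert u D'"
    proof (cases "b = 1")
      case False
      then have "(a, b - 1) \<in> D" using young_down[OF yD, of a b a "b - 1"] v vi pv by auto
      then show ?thesis using D' ui vi uv False pv by auto
    qed simp
  qed (use pv in auto)
  have "insert v (insert u D') = D" using D' u v by auto
  moreover have "cls r u \<longleftrightarrow> \<not> cls r v" using uv ui cls_Suc1 cls_Suc2 by auto
  ultimately show ?thesis using au av by simp
qed

lemma Phi_domino:
  assumes yD: "young D" and yD': "young D'" and D': "D' = D - {u, v}" and u: "u \<in> D" and v: "v \<in> D"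
    and uv: "v = (fst u + 1, snd u) \<or> v = (fst u, snd u + 1)"
  shows "Phi r D = Phi r D'"
proof -
  note h = domino_ordered[OF assms, of r]
  obtain i j where ui: "u = (i,j)" by (cases u)
  obtain a b where vi: "v = (a,b)" by (cases v)
  have yD'': "young (insert u D')" using h by (simp add: addable_def)
  have "Phi r D = Phi r (insert u D') + (if cls r v then -2 else 2)"
    using Phi_insert[OF yD'', of a b r] h vi by simp
  also have "Phi r (insert u D') = Phi r D' + (if cls r u then -2 else 2)"
    using Phi_insert[OF yD', of i j r] h ui by simp
  finally show ?thesis using h by auto
qed

lemma Phi_step:
  assumes "domino_step D D'" "young D"
  shows "Phi r D = Phi r D'"
proof -
  obtain a b where ab: "a \<in> D" "b \<in> D" "adjacent a b" "D' = D - {a, b}" "young D'"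
    using assms(1) by (auto simp: domino_step_def)
  obtain i j where ai: "a = (i,j)" by (cases a)
  from adjacent_cases[OF ab(3)[unfolded ai]]
  have "b = (fst a + 1, snd a) \<or> b = (fst a, snd a + 1) \<or> a = (fst b + 1, snd b) \<or> a = (fst b, snd b + 1)"
    using ai by auto
  then show ?thesis
  proof (elim disjE)
    assume "b = (fst a + 1, snd a)" then show ?thesis using Phi_domino[OF assms(2) ab(5) ab(4) ab(1) ab(2)] by auto
  next
    assume "b = (fst a, snd a + 1)" then show ?thesis using Phi_domino[OF assms(2) ab(5) ab(4) ab(1) ab(2)] by auto
  next
    assume h: "a = (fst b + 1, snd b)"
    have "D' = D - {b, a}" using ab(4) by auto
    then show ?thesis using Phi_domino[OF assms(2) ab(5) _ ab(2) ab(1)] h by auto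
  next
    assume h: "a = (fst b, snd b + 1)"
    have "D' = D - {b, a}" using ab(4) by auto
    then show ?thesis using Phi_domino[OF assms(2) ab(5) _ ab(2) ab(1)] h by auto
  qed
qed

lemma AC_stair: "AC r (staircase r) = AD (r + 2)"
  unfolding AC_def addable_stair by (auto simp: AD_def cls_def)

lemma RC_stair: "RC r (staircase r) = {}"
proof -
  have "\<And>i j. removable (staircase r) (i,j) \<Longrightarrow> \<not> cls r (i,j)"
  proof -
    fix i j assume "removable (staircase r) (i,j)"
    then have "i + j = r + 1" by (rule removable_stair)
    then show "\<not> cls r (i,j)" unfolding cls_def by simp presburger
  qed
  then show ?thesis unfolding RC_def by auto
qed

lemma Phi_stair: "Phi r (staircase r) = int r + 1"
  unfolding Phi_def AC_stair RC_stair card_AD by simp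



definition Tinv :: "nat \<Rightarrow> square set \<Rightarrow> bool" where
  "Tinv r D \<longleftrightarrow> (\<forall>s\<in>D - staircase r. \<exists>t\<in>D - staircase r. adjacent s t)"

definition Q1 :: "nat \<Rightarrow> square set \<Rightarrow> bool" where
  "Q1 r D \<longleftrightarrow> (\<forall>i0 j0. 1 \<le> i0 \<longrightarrow> 1 \<le> j0 \<longrightarrow> i0 + j0 = r + 2 \<longrightarrow> (i0, j0) \<notin> D \<longrightarrow>
     (\<forall>i j. (i, j) \<in> D \<longrightarrow> j < j0 \<longrightarrow> (i + 1, j) \<notin> D \<longrightarrow> \<not> cls r (i, j)))"

definition Q2 :: "nat \<Rightarrow> square set \<Rightarrow> bool" where
  "Q2 r D \<longleftrightarrow> (\<forall>i0 j0. 1 \<le> i0 \<longrightarrow> 1 \<le> j0 \<longrightarrow> i0 + j0 = r + 2 \<longrightarrow> (i0, j0) \<notin> D \<longrightarrow>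
     (\<forall>i j. (i, j) \<in> D \<longrightarrow> i < i0 \<longrightarrow> (i, j + 1) \<notin> D \<longrightarrow> \<not> cls r (i, j)))"

lemma cls_SS1: "cls r (Suc (Suc a), b) \<longleftrightarrow> cls r (a, b)" using cls_Suc1 by simp
lemma cls_SS2: "cls r (a, Suc (Suc b)) \<longleftrightarrow> cls r (a, b)" using cls_Suc2 by simp

lemma Q1_step:
  assumes yD: "young D" and D': "D' = D - {c, e}" and c: "c \<in> D" and e: "e \<in> D" and ce: "adjacent c e"
    and st: "staircase r \<subseteq> D'" and q: "\<And>a b. (a, b) \<in> D' \<Longrightarrow> b < j0 \<Longrightarrow> (a + 1, b) \<notin> D' \<Longrightarrow> \<not> cls r (a, b)"
    and t: "1 \<le> i0" "1 \<le> j0" "i0 + j0 = r + 2" "(i0, j0) \<notin> D"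
    and ci: "c = (i, j)" and jj: "j < j0" and nd: "(i + 1, j) \<notin> D"
  shows "\<not> cls r (i, j)"
proof -
  have pc: "1 \<le> i" "1 \<le> j" using young_pos[OF yD] c ci by auto
  have cD': "c \<notin> D'" "e \<notin> D'" using D' by auto
  have cns: "\<not> (i + j \<le> r + 1)"
  proof
    assume "i + j \<le> r + 1"
    then have "(i, j) \<in> staircase r" using pc by (simp add: stair_mem)
    then show False using st cD' ci by auto
  qed
  have j0r: "j0 \<le> r + 1" using t by simp
  have pe: "1 \<le> fst e" "1 \<le> snd e" using young_pos[OF yD, of "fst e" "snd e"] e by auto
  from adjacent_cases[OF ce[unfolded ci]]
  show ?thesis
  proof (elim disjE conjE)
    assume ee: "e = (i - 1, j)" "i \<ge> 1"
    show ?thesis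
    proof (cases "i = 2")
      case True
      then have "e \<in> staircase r" using ee jj j0r pc by (auto simp: stair_mem)
      then show ?thesis using st cD' by auto
    next
      case False
      then have i3: "i \<ge> 3" using ee pe by auto
      have "(i - 2, j) \<in> D" using young_down[OF yD, of i j "i - 2" j] c ci i3 pc by auto
      then have "(i - 2, j) \<in> D'" using D' ci ee i3 by auto
      moreover have "(i - 2 + 1, j) \<notin> D'" using cD' ee i3 by (simp add: numeral_2_eq_2 Suc_diff_Suc)
      ultimately have "\<not> cls r (i - 2, j)" using q jj by blast
      moreover have "i = Suc (Suc (i - 2))" using i3 by simp
      ultimately show ?thesis using cls_SS1[of r "i - 2" j] by metis
    qed
  next
    assume "e = (i + 1, j)" then show ?thesis using e nd by simp
  next
    assume ee: "e = (i, j - 1)" "j \<ge> 1"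
    have j2: "j \<ge> 2" using ee pe by auto
    have i2: "i \<ge> 2"
    proof (rule ccontr)
      assume "\<not> i \<ge> 2" then have "i = 1" using pc by simp
      then show False using cns jj j0r by simp
    qed
    have "(i - 1, j) \<in> D" using young_down[OF yD, of i j "i - 1" j] c ci i2 pc by auto
    then have "(i - 1, j) \<in> D'" using D' ci ee i2 by auto
    moreover have "(i - 1 + 1, j) \<notin> D'" using cD' ci i2 by simp
    ultimately have n1: "\<not> cls r (i - 1, j)" using q jj by blast
    have "(i - 1, j - 1) \<in> D" using young_down[OF yD, of i j "i - 1" "j - 1"] c ci i2 j2 by auto
    then have "(i - 1, j - 1) \<in> D'" using D' ci ee i2 by auto
    moreover have "(i - 1 + 1, j - 1) \<notin> D'" using cD' ee i2 by simp
    ultimately have n2: "\<not> cls r (i - 1, j - 1)" using q jj by auto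
    have "cls r (i - 1, j - 1) \<longleftrightarrow> \<not> cls r (i - 1, j)" using cls_pred2[of "j" r "i - 1"] j2 by simp
    then show ?thesis using n1 n2 by simp
  next
    assume ee: "e = (i, j + 1)"
    have i2: "i \<ge> 2"
    proof (rule ccontr)
      assume "\<not> i \<ge> 2" then have "i = 1" using pc by simp
      then show False using cns jj j0r by simp
    qed
    have "(i - 1, j) \<in> D" using young_down[OF yD, of i j "i - 1" j] c ci i2 pc by auto
    then have "(i - 1, j) \<in> D'" using D' ci ee i2 by auto
    moreover have "(i - 1 + 1, j) \<notin> D'" using cD' ci i2 by simp
    ultimately have n1: "\<not> cls r (i - 1, j)" using q jj by blast
    show ?thesis
    proof (cases "j + 1 < j0")
      case True
      have "(i - 1, j + 1) \<in> D" using young_down[OF yD, of i "j+1" "i - 1" "j + 1"] e ee i2 by auto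
      then have "(i - 1, j + 1) \<in> D'" using D' ci ee i2 by auto
      moreover have "(i - 1 + 1, j + 1) \<notin> D'" using cD' ee i2 by simp
      ultimately have n2: "\<not> cls r (i - 1, j + 1)" using q True by blast
      then show ?thesis using n1 cls_Suc2[of r "i - 1" j] by simp
    next
      case False
      then have "j + 1 = j0" using jj by simp
      moreover have "i0 \<le> i" using cns t \<open>j + 1 = j0\<close> by simp
      ultimately have "(i0, j0) \<in> D" using young_down[OF yD, of i "j+1" i0 j0] e ee t by auto
      then show ?thesis using t by simp
    qed
  qed
qed

lemma Q2_step:
  assumes yD: "young D" and D': "D' = D - {c, e}" and c: "c \<in> D" and e: "e \<in> D" and ce: "adjacent c e"
    and st: "staircase r \<subseteq> D'" and q: "\<And>a b. (a, b) \<in> D' \<Longrightarrow> a < i0 \<Longrightarrow> (a, b + 1) \<notin> D' \<Longrightarrow> \<not> cls r (a, b)"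
    and t: "1 \<le> i0" "1 \<le> j0" "i0 + j0 = r + 2" "(i0, j0) \<notin> D"
    and ci: "c = (i, j)" and jj: "i < i0" and nd: "(i, j + 1) \<notin> D"
  shows "\<not> cls r (i, j)"
proof -
  have pc: "1 \<le> i" "1 \<le> j" using young_pos[OF yD] c ci by auto
  have cD': "c \<notin> D'" "e \<notin> D'" using D' by auto
  have cns: "\<not> (i + j \<le> r + 1)"
  proof
    assume "i + j \<le> r + 1"
    then have "(i, j) \<in> staircase r" using pc by (simp add: stair_mem)
    then show False using st cD' ci by auto
  qed
  have j0r: "i0 \<le> r + 1" using t by simp
  have pe: "1 \<le> fst e" "1 \<le> snd e" using young_pos[OF yD, of "fst e" "snd e"] e by auto
  from adjacent_cases[OF ce[unfolded ci]]
  show ?thesis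
  proof (elim disjE conjE)
    assume ee: "e = (i, j - 1)" "j \<ge> 1"
    show ?thesis
    proof (cases "j = 2")
      case True
      then have "e \<in> staircase r" using ee jj j0r pc by (auto simp: stair_mem)
      then show ?thesis using st cD' by auto
    next
      case False
      then have i3: "j \<ge> 3" using ee pe by auto
      have "(i, j - 2) \<in> D" using young_down[OF yD, of i j i "j - 2"] c ci i3 pc by auto
      then have "(i, j - 2) \<in> D'" using D' ci ee i3 by auto
      moreover have "(i, j - 2 + 1) \<notin> D'" using cD' ee i3 by (simp add: numeral_2_eq_2 Suc_diff_Suc)
      ultimately have "\<not> cls r (i, j - 2)" using q jj by blast
      moreover have "j = Suc (Suc (j - 2))" using i3 by simp
      ultimately show ?thesis using cls_SS2[of r i "j - 2"] by metis
    qed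
  next
    assume "e = (i, j + 1)" then show ?thesis using e nd by simp
  next
    assume ee: "e = (i - 1, j)" "i \<ge> 1"
    have j2: "i \<ge> 2" using ee pe by auto
    have i2: "j \<ge> 2"
    proof (rule ccontr)
      assume "\<not> j \<ge> 2" then have "j = 1" using pc by simp
      then show False using cns jj j0r by simp
    qed
    have "(i, j - 1) \<in> D" using young_down[OF yD, of i j i "j - 1"] c ci i2 pc by auto
    then have "(i, j - 1) \<in> D'" using D' ci ee i2 by auto
    moreover have "(i, j - 1 + 1) \<notin> D'" using cD' ci i2 by simp
    ultimately have n1: "\<not> cls r (i, j - 1)" using q jj by blast
    have "(i - 1, j - 1) \<in> D" using young_down[OF yD, of i j "i - 1" "j - 1"] c ci i2 j2 by auto
    then have "(i - 1, j - 1) \<in> D'" using D' ci ee i2 by auto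
    moreover have "(i - 1, j - 1 + 1) \<notin> D'" using cD' ee i2 by simp
    ultimately have n2: "\<not> cls r (i - 1, j - 1)" using q jj by auto
    have "cls r (i - 1, j - 1) \<longleftrightarrow> \<not> cls r (i, j - 1)" using cls_pred1[of "i" r "j - 1"] j2 by simp
    then show ?thesis using n1 n2 by simp
  next
    assume ee: "e = (i + 1, j)"
    have i2: "j \<ge> 2"
    proof (rule ccontr)
      assume "\<not> j \<ge> 2" then have "j = 1" using pc by simp
      then show False using cns jj j0r by simp
    qed
    have "(i, j - 1) \<in> D" using young_down[OF yD, of i j i "j - 1"] c ci i2 pc by auto
    then have "(i, j - 1) \<in> D'" using D' ci ee i2 by auto
    moreover have "(i, j - 1 + 1) \<notin> D'" using cD' ci i2 by simp
    ultimately have n1: "\<not> cls r (i, j - 1)" using q jj by blast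
    show ?thesis
    proof (cases "i + 1 < i0")
      case True
      have "(i + 1, j - 1) \<in> D" using young_down[OF yD, of "i+1" j "i + 1" "j - 1"] e ee i2 by auto
      then have "(i + 1, j - 1) \<in> D'" using D' ci ee i2 by auto
      moreover have "(i + 1, j - 1 + 1) \<notin> D'" using cD' ee i2 by simp
      ultimately have n2: "\<not> cls r (i + 1, j - 1)" using q True by blast
      then show ?thesis using n1 cls_Suc1[of r i "j - 1"] by simp
    next
      case False
      then have "i + 1 = i0" using jj by simp
      moreover have "j0 \<le> j" using cns t \<open>i + 1 = i0\<close> by simp
      ultimately have "(i0, j0) \<in> D" using young_down[OF yD, of "i+1" j i0 j0] e ee t by auto
      then show ?thesis using t by simp
    qed
  qed
qed



lemma Q1_stair: "Q1 r (staircase r)"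
  unfolding Q1_def
proof (intro allI impI)
  fix i0 j0 i j
  assume "(i, j) \<in> staircase r" "(i + 1, j) \<notin> staircase r"
  then have "i + j = r + 1" by (auto simp: stair_mem)
  then show "\<not> cls r (i, j)" unfolding cls_def by simp presburger
qed

lemma Q2_stair: "Q2 r (staircase r)"
  unfolding Q2_def
proof (intro allI impI)
  fix i0 j0 i j
  assume "(i, j) \<in> staircase r" "(i, j + 1) \<notin> staircase r"
  then have "i + j = r + 1" by (auto simp: stair_mem)
  then show "\<not> cls r (i, j)" unfolding cls_def by simp presburger
qed

lemma chain_inv:
  assumes "domino_step\<^sup>*\<^sup>* D (staircase r)" "young D"
  shows "staircase r \<subseteq> D \<and> Tinv r D \<and> Q1 r D \<and> Q2 r D \<and> Phi r D = int r + 1"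
  using assms
proof (induction rule: converse_rtranclp_induct)
  case base
  show ?case using Q1_stair Q2_stair Phi_stair by (auto simp: Tinv_def)
next
  case (step y z)
  obtain a b where ab: "a \<in> y" "b \<in> y" "adjacent a b" "z = y - {a, b}" "young z"
    using step.hyps(1) by (auto simp: domino_step_def)
  have IH: "staircase r \<subseteq> z \<and> Tinv r z \<and> Q1 r z \<and> Q2 r z \<and> Phi r z = int r + 1"
    using step.IH ab(5) by simp
  have yy: "young y" using step.prems .
  have stz: "staircase r \<subseteq> z" using IH by simp
  have st: "staircase r \<subseteq> y" using IH ab(4) by auto
  have T: "Tinv r y"
    unfolding Tinv_def
  proof
    fix s assume s: "s \<in> y - staircase r"
    show "\<exists>t\<in>y - staircase r. adjacent s t"
    proof (cases "s \<in> z")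
      case True
      then obtain t where "t \<in> z - staircase r" "adjacent s t" using IH s unfolding Tinv_def by blast
      then show ?thesis using ab(4) by blast
    next
      case False
      then have "s = a \<or> s = b" using s ab(4) by auto
      moreover have "a \<notin> staircase r" "b \<notin> staircase r" using IH ab(4) by auto
      ultimately show ?thesis using ab(1,2,3) adjacent_sym by blast
    qed
  qed
  have Q1: "Q1 r y"
    unfolding Q1_def
  proof (intro allI impI)
    fix i0 j0 i j
    assume t: "1 \<le> i0" "1 \<le> j0" "i0 + j0 = r + 2" "(i0, j0) \<notin> y"
      and c: "(i, j) \<in> y" "j < j0" "(i + 1, j) \<notin> y"
    have q: "\<And>a b. (a, b) \<in> z \<Longrightarrow> b < j0 \<Longrightarrow> (a + 1, b) \<notin> z \<Longrightarrow> \<not> cls r (a, b)"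
      using IH t ab(4) unfolding Q1_def by blast
    show "\<not> cls r (i, j)"
    proof (cases "(i, j) \<in> z")
      case True
      then show ?thesis using q c ab(4) by auto
    next
      case False
      then have "(i, j) = a \<or> (i, j) = b" using c ab(4) by auto
      then show ?thesis
      proof
        assume ha: "(i, j) = a"
        show ?thesis using Q1_step[OF yy ab(4) ab(1) ab(2) ab(3) stz q t(1) t(2) t(3) t(4) sym[OF ha] c(2) c(3)] .
      next
        assume h: "(i, j) = b"
        have zz: "z = y - {b, a}" using ab(4) by auto
        have ba: "adjacent b a" using ab(3) adjacent_sym by blast
        show ?thesis using Q1_step[OF yy zz ab(2) ab(1) ba stz q t(1) t(2) t(3) t(4) sym[OF h] c(2) c(3)] .
      qed
    qed
  qed
  have Q2: "Q2 r y"
    unfolding Q2_def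
  proof (intro allI impI)
    fix i0 j0 i j
    assume t: "1 \<le> i0" "1 \<le> j0" "i0 + j0 = r + 2" "(i0, j0) \<notin> y"
      and c: "(i, j) \<in> y" "i < i0" "(i, j + 1) \<notin> y"
    have q: "\<And>a b. (a, b) \<in> z \<Longrightarrow> a < i0 \<Longrightarrow> (a, b + 1) \<notin> z \<Longrightarrow> \<not> cls r (a, b)"
      using IH t ab(4) unfolding Q2_def by blast
    show "\<not> cls r (i, j)"
    proof (cases "(i, j) \<in> z")
      case True
      then show ?thesis using q c ab(4) by auto
    next
      case False
      then have "(i, j) = a \<or> (i, j) = b" using c ab(4) by auto
      then show ?thesis
      proof
        assume ha: "(i, j) = a"
        show ?thesis using Q2_step[OF yy ab(4) ab(1) ab(2) ab(3) stz q t(1) t(2) t(3) t(4) sym[OF ha] c(2) c(3)] .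
      next
        assume h: "(i, j) = b"
        have zz: "z = y - {b, a}" using ab(4) by auto
        have ba: "adjacent b a" using ab(3) adjacent_sym by blast
        show ?thesis using Q2_step[OF yy zz ab(2) ab(1) ba stz q t(1) t(2) t(3) t(4) sym[OF h] c(2) c(3)] .
      qed
    qed
  qed
  have "Phi r y = Phi r z" using Phi_step[OF step.hyps(1) yy] .
  then show ?case using st T Q1 Q2 IH by simp
qed



lemma inP_inv:
  assumes "in_P r p"
  shows "young (Y p) \<and> staircase r \<subseteq> Y p \<and> Tinv r (Y p) \<and> Q1 r (Y p) \<and> Q2 r (Y p) \<and> Phi r (Y p) = int r + 1"
proof -
  have yp: "young (Y p)" using assms young_Y by (simp add: in_P_def)
  then show ?thesis using chain_inv[of "Y p" r] assms by (simp add: in_P_def)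
qed

lemma HC_eq:
  assumes "in_P r p"
  shows "HC r p = AC r (Y p) \<union> RC r (Y p)"
proof -
  have yp: "young (Y p)" and st: "staircase r \<subseteq> Y p" using inP_inv[OF assms] by auto
  show ?thesis
  proof (rule set_eqI)
    fix c :: square
    obtain i j where c: "c = (i, j)" by (cases c)
    have "(addable (Y p) (i,j) \<or> removable (Y p) (i,j)) \<and> cls r (i,j) \<Longrightarrow> i + j > r + 1"
    proof -
      assume h: "(addable (Y p) (i,j) \<or> removable (Y p) (i,j)) \<and> cls r (i,j)"
      have pos: "1 \<le> i" "1 \<le> j"
        using h addable_iff[OF yp, of i j] young_pos[OF yp, of i j] by (auto simp: removable_def)
      show "i + j > r + 1"
      proof (rule ccontr)
        assume "\<not> i + j > r + 1"
        moreover have "i + j \<noteq> r + 1"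
        proof -
          have "(i + j) mod 2 = r mod 2" using h by (simp add: cls_def)
          then show ?thesis by presburger
        qed
        ultimately have le: "i + j \<le> r" by simp
        then have "(i, j) \<in> Y p" "(i + 1, j) \<in> Y p" using st pos by (auto simp: stair_mem subset_iff)
        then show False using h addable_iff[OF yp, of i j] removable_iff[OF yp, of i j] by auto
      qed
    qed
    moreover have "addable (Y p) (i,j) \<or> removable (Y p) (i,j) \<Longrightarrow> 1 \<le> i \<and> 1 \<le> j"
      using addable_iff[OF yp, of i j] young_pos[OF yp, of i j] by (auto simp: removable_def)
    ultimately show "c \<in> HC r p \<longleftrightarrow> c \<in> AC r (Y p) \<union> RC r (Y p)"
      unfolding c HC_def AC_def RC_def addrem_eq cls_def by auto
  qed
qed

lemma no_removable_antidiag: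
  assumes "in_P r p" and "(i, j) \<in> Y p" and "i + j = r + 2"
  shows "\<not> removable (Y p) (i, j)"
proof
  assume rm: "removable (Y p) (i, j)"
  have yp: "young (Y p)" and st: "staircase r \<subseteq> Y p" and T: "Tinv r (Y p)" using inP_inv[OF assms(1)] by auto
  have pos: "1 \<le> i" "1 \<le> j" using young_pos[OF yp assms(2)] by auto
  have n: "(i+1, j) \<notin> Y p" "(i, j+1) \<notin> Y p" using rm removable_iff[OF yp] by auto
  have "(i, j) \<notin> staircase r" using assms(3) by (simp add: stair_mem)
  then obtain t where t: "t \<in> Y p - staircase r" "adjacent (i, j) t" using T assms(2) unfolding Tinv_def by blast
  from adjacent_cases[OF t(2)] show False
  proof (elim disjE conjE)
    assume "t = (i - 1, j)" "1 \<le> i"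
    then show False using t(1) young_pos[OF yp, of "i-1" j] assms(3) by (auto simp: stair_mem)
  next
    assume "t = (i, j - 1)" "1 \<le> j"
    then show False using t(1) young_pos[OF yp, of i "j - 1"] assms(3) by (auto simp: stair_mem)
  qed (use t n in auto)
qed

lemma L_eq:
  assumes "in_P r p"
  shows "{c \<in> HC r p. fst c + snd c = r + 2} = AD (r + 2) - Y p"
proof -
  have yp: "young (Y p)" and st: "staircase r \<subseteq> Y p" using inP_inv[OF assms] by auto
  show ?thesis
  proof (rule set_eqI)
    fix c :: square
    obtain i j where c: "c = (i, j)" by (cases c)
    show "c \<in> {c \<in> HC r p. fst c + snd c = r + 2} \<longleftrightarrow> c \<in> AD (r + 2) - Y p"
    proof
      assume h: "c \<in> {c \<in> HC r p. fst c + snd c = r + 2}"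
      then have "(i,j) \<notin> Y p" using no_removable_antidiag[OF assms, of i j] c
        by (auto simp: HC_def addrem_eq addable_def)
      then show "c \<in> AD (r + 2) - Y p" using h c by (auto simp: HC_def AD_def)
    next
      assume h: "c \<in> AD (r + 2) - Y p"
      then have ij: "1 \<le> i" "1 \<le> j" "i + j = r + 2" "(i,j) \<notin> Y p" using c by (auto simp: AD_def)
      have u: "(i - 1, j) \<in> Y p" if "i \<noteq> 1"
        using that ij st by (intro subsetD[OF st]) (simp add: stair_mem)
      have l: "(i, j - 1) \<in> Y p" if "j \<noteq> 1"
        using that ij st by (intro subsetD[OF st]) (simp add: stair_mem)
      have "addable (Y p) (i, j)"
        unfolding addable_iff[OF yp] using ij u l by auto
      then show "c \<in> {c \<in> HC r p. fst c + snd c = r + 2}" using ij c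
        by (auto simp: HC_def addrem_eq)
    qed
  qed
qed

lemma HCs_eq: "HCs r p = HC r p - {c \<in> HC r p. fst c + snd c = r + 2}"
  unfolding HCs_def HC_def by auto



lemma kappa_eq:
  assumes "in_P r p" shows "kappa r p = card (RC r (Y p))"
proof -
  have "HC r p \<inter> Y p = RC r (Y p)"
    unfolding HC_eq[OF assms] by (auto simp: AC_def RC_def addable_def removable_def)
  then show ?thesis by (simp add: kappa_def)
qed

lemma gamma_eq:
  assumes "in_P r p" shows "gamma r p = card (AD (r + 2) \<inter> Y p)"
proof -
  have yp: "young (Y p)" using inP_inv[OF assms] by auto
  have "{(i, j). (i, j) \<in> Y p \<and> i + j = r + 2} = AD (r + 2) \<inter> Y p"
    using young_pos[OF yp] by (auto simp: AD_def)
  then show ?thesis by (simp add: gamma_def)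
qed

lemma finite_HC: "in_P r p \<Longrightarrow> finite (HC r p)"
  using HC_eq[of r p] inP_inv[of r p] finite_AC finite_RC by auto

lemma finite_HCs: "in_P r p \<Longrightarrow> finite (HCs r p)"
  using finite_HC[of r p] by (simp add: HCs_eq)

lemma card_HCs:
  assumes "in_P r p"
  shows "card (HCs r p) = gamma r p + 2 * kappa r p"
proof -
  have yp: "young (Y p)" and Ph: "Phi r (Y p) = int r + 1" using inP_inv[OF assms] by auto
  have fA: "finite (AC r (Y p))" and fR: "finite (RC r (Y p))" using finite_AC finite_RC yp by auto
  have disj: "AC r (Y p) \<inter> RC r (Y p) = {}" by (auto simp: AC_def RC_def addable_def removable_def)
  have cHC: "card (HC r p) = card (AC r (Y p)) + card (RC r (Y p))"
    unfolding HC_eq[OF assms] using fA fR disj by (simp add: card_Un_disjoint)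
  have cA: "card (AC r (Y p)) = card (RC r (Y p)) + r + 1" using Ph by (simp add: Phi_def)
  have LHC: "{c \<in> HC r p. fst c + snd c = r + 2} \<subseteq> HC r p" by auto
  have fL: "finite {c \<in> HC r p. fst c + snd c = r + 2}" using finite_HC[OF assms] by simp
  have cHCs: "card (HCs r p) = card (HC r p) - card {c \<in> HC r p. fst c + snd c = r + 2}"
    unfolding HCs_eq using card_Diff_subset[OF fL LHC] .
  have cL: "card {c \<in> HC r p. fst c + snd c = r + 2} = (r + 1) - gamma r p"
    unfolding L_eq[OF assms] gamma_eq[OF assms]
    using card_Diff_subset_Int[of "AD (r+2)" "Y p"] finite_AD card_AD by simp
  have g: "gamma r p \<le> r + 1"
    unfolding gamma_eq[OF assms] using card_mono[OF finite_AD, of "AD (r+2) \<inter> Y p" "r+2"] card_AD by simp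
  show ?thesis using cHCs cL cHC cA g kappa_eq[OF assms] by simp
qed

lemma full_antidiag:
  assumes "in_P r p" and "kappa r p > 0"
  shows "AD (r + 2) \<subseteq> Y p"
proof
  fix t assume t: "t \<in> AD (r + 2)"
  obtain i0 j0 where ti: "t = (i0, j0)" "1 \<le> i0" "1 \<le> j0" "i0 + j0 = r + 2" using t by (auto simp: AD_def)
  show "t \<in> Y p"
  proof (rule ccontr)
    assume nt: "t \<notin> Y p"
    have yp: "young (Y p)" and q1: "Q1 r (Y p)" and q2: "Q2 r (Y p)" using inP_inv[OF assms(1)] by auto
    have "RC r (Y p) \<noteq> {}" using assms kappa_eq[OF assms(1)] by auto
    then obtain i j where s: "removable (Y p) (i, j)" "cls r (i, j)" by (auto simp: RC_def)
    have s': "(i, j) \<in> Y p" "(i + 1, j) \<notin> Y p" "(i, j + 1) \<notin> Y p" using s(1) removable_iff[OF yp] by auto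
    show False
    proof (cases "j < j0")
      case True
      then show False using q1 ti nt s' s(2) unfolding Q1_def by blast
    next
      case False
      show False
      proof (cases "i < i0")
        case True
        then show False using q2 ti nt s' s(2) unfolding Q2_def by blast
      next
        case False2: False
        then have "(i0, j0) \<in> Y p" using young_down[OF yp s'(1), of i0 j0] ti False by auto
        then show False using nt ti by simp
      qed
    qed
  qed
qed

lemma HCs_full:
  assumes "in_P r p" and "kappa r p > 0"
  shows "HCs r p = HC r p"
  using full_antidiag[OF assms] L_eq[OF assms(1)] HCs_eq[of r p] by auto



definition corner :: "square set \<Rightarrow> square \<Rightarrow> bool" where
  "corner D c \<longleftrightarrow> addable D c \<or> removable D c"

lemma same_row:
  assumes yD: "young D" and c1: "corner D (t, j)" and c2: "corner D (t, j')"
    and k1: "cls r (t, j)" and k2: "cls r (t, j')" and lt: "j < j'"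
  shows False
proof -
  have p1: "1 \<le> t" "1 \<le> j" using c1 addable_iff[OF yD, of t j] young_pos[OF yD, of t j]
    by (auto simp: corner_def removable_def)
  show False
  proof (cases "(t, j') \<in> D")
    case True
    then have "(t, j + 1) \<in> D" "(t, j) \<in> D" using young_down[OF yD True] lt p1 by auto
    then show False using c1 removable_iff[OF yD] by (auto simp: corner_def addable_def)
  next
    case False
    then have "addable D (t, j')" using c2 by (auto simp: corner_def removable_def)
    then have jm: "(t, j' - 1) \<in> D" using addable_iff[OF yD, of t j'] lt p1 by auto
    show False
    proof (cases "(t, j) \<in> D")
      case True
      then have "(t, j + 1) \<notin> D" using c1 removable_iff[OF yD] by (auto simp: corner_def addable_def)
      then have "\<not> j + 1 \<le> j' - 1" using young_down[OF yD jm, of t "j+1"] p1 by auto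
      then have "j' = Suc j" using lt by simp
      then show False using k1 k2 cls_Suc2 by simp
    next
      case False
      then show False using young_down[OF yD jm, of t j] p1 lt c1 by (auto simp: corner_def removable_def)
    qed
  qed
qed

lemma row_col:
  assumes yD: "young D" and c1: "corner D (i, j1)" and c2: "corner D (i', j2)" and lt: "i < i'"
  shows "j2 \<le> j1"
proof -
  have p1: "1 \<le> i" "1 \<le> j1" using c1 addable_iff[OF yD, of i j1] young_pos[OF yD, of i j1]
    by (auto simp: corner_def removable_def)
  have p2: "1 \<le> i'" "1 \<le> j2" using c2 addable_iff[OF yD, of i' j2] young_pos[OF yD, of i' j2]
    by (auto simp: corner_def removable_def)
  have m: "(i, j2) \<in> D"
  proof (cases "(i', j2) \<in> D")
    case True then show ?thesis using young_down[OF yD True, of i j2] p1 p2 lt by auto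
  next
    case False
    then have "addable D (i', j2)" using c2 by (auto simp: corner_def removable_def)
    then have "(i' - 1, j2) \<in> D" using addable_iff[OF yD, of i' j2] lt p1 by auto
    then show ?thesis using young_down[OF yD, of "i' - 1" j2 i j2] p1 p2 lt by auto
  qed
  show ?thesis
  proof (rule ccontr)
    assume "\<not> j2 \<le> j1"
    then have "(i, j1 + 1) \<in> D" "(i, j1) \<in> D" using young_down[OF yD m] p1 by auto
    then show False using c1 removable_iff[OF yD] by (auto simp: corner_def addable_def)
  qed
qed

lemma alt_abstract:
  fixes l :: "nat \<Rightarrow> nat" and e :: "nat \<Rightarrow> bool" and cc :: "nat \<Rightarrow> bool"
  assumes mono: "\<And>t. 1 \<le> t \<Longrightarrow> l (t + 1) \<le> l t"
    and eps: "\<And>t. l (t + 1) = l t \<Longrightarrow> (e (t + 1) \<longleftrightarrow> \<not> e t)"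
    and ccd: "\<And>t. cc t \<longleftrightarrow> (e t \<and> l (t + 1) < l t) \<or> (\<not> e t \<and> (t = 1 \<or> l t < l (t - 1)))"
    and t1: "1 \<le> t1" and lt: "t1 < t2" and c1: "cc t1" and c2: "cc t2"
    and btw: "\<And>t. t1 < t \<Longrightarrow> t < t2 \<Longrightarrow> \<not> cc t"
  shows "odd (t2 - t1)"
proof (cases "t2 = t1 + 1")
  case True then show ?thesis by simp
next
  case False
  then have lt2: "t1 + 1 < t2" using lt by simp
  have claim: "t1 + 1 + k < t2 \<Longrightarrow> (e (t1 + 1 + k) \<longleftrightarrow> even k)" for k
  proof (induction k)
    case 0
    show ?case
    proof (rule ccontr)
      assume "\<not> (e (t1 + 1 + 0) \<longleftrightarrow> even (0::nat))"
      then have ne: "\<not> e (t1 + 1)" by simp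
      have "\<not> cc (t1 + 1)" using btw 0 by simp
      then have "\<not> l (t1 + 1) < l t1" using ccd[of "t1+1"] ne t1 by simp
      then have eq: "l (t1 + 1) = l t1" using mono[OF t1] by simp
      then have "e t1" using eps[OF eq] ne by simp
      then show False using c1 ccd[of t1] eq by simp
    qed
  next
    case (Suc k)
    let ?t = "t1 + 1 + k"
    have b: "?t < t2" "?t + 1 < t2" using Suc.prems by auto
    have IH: "e ?t \<longleftrightarrow> even k" using Suc.IH b by simp
    have nt: "\<not> cc ?t" "\<not> cc (?t + 1)" using btw b by auto
    show ?case
    proof (cases "e ?t")
      case True
      then have "\<not> l (?t + 1) < l ?t" using nt(1) ccd[of ?t] by simp
      then have eq: "l (?t + 1) = l ?t" using mono[of ?t] t1 by simp
      then show ?thesis using eps[OF eq] True IH by simp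
    next
      case False
      have "e (?t + 1)"
      proof (rule ccontr)
        assume ne: "\<not> e (?t + 1)"
        then have "\<not> l (?t + 1) < l ?t" using nt(2) ccd[of "?t + 1"] t1 by simp
        then have eq: "l (?t + 1) = l ?t" using mono[of ?t] t1 by simp
        then show False using eps[OF eq] False ne by simp
      qed
      then show ?thesis using False IH by simp
    qed
  qed
  define k where "k = t2 - 2 - t1"
  have tk: "t1 + 1 + k = t2 - 1" using lt2 by (simp add: k_def)
  have ek: "e (t2 - 1) \<longleftrightarrow> even k" using claim[of k] tk lt2 by simp
  have "\<not> e (t2 - 1)"
  proof
    assume et: "e (t2 - 1)"
    have "\<not> cc (t2 - 1)" using btw lt2 by simp
    then have "\<not> l (t2 - 1 + 1) < l (t2 - 1)" using ccd[of "t2 - 1"] et by simp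
    moreover have "t2 - 1 + 1 = t2" using lt2 by simp
    ultimately have eq: "l t2 = l (t2 - 1)" using mono[of "t2 - 1"] lt2 t1 by (metis le_add1 le_antisym le_trans less_imp_le_nat not_less trans_less_add1 Suc_eq_plus1 Nat.le_diff_conv2 le_add2 less_diff_conv Suc_leI)
    have "\<not> e t2" using eps[of "t2 - 1"] eq et \<open>t2 - 1 + 1 = t2\<close> by simp
    then show False using c2 ccd[of t2] eq lt2 by simp
  qed
  then have "odd k" using ek by simp
  then show ?thesis using lt2 by (simp add: k_def)
qed



lemma rem_Y:
  assumes "is_partition p"
  shows "removable (Y p) (t, j) \<longleftrightarrow> 1 \<le> t \<and> 1 \<le> j \<and> j = lam p t \<and> lam p (t + 1) < lam p t"
  unfolding removable_iff[OF young_Y[OF assms]] Y_iff by auto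

lemma add_Y:
  assumes "is_partition p"
  shows "addable (Y p) (t, j) \<longleftrightarrow> 1 \<le> t \<and> j = lam p t + 1 \<and> (t = 1 \<or> lam p t < lam p (t - 1))"
proof
  assume h: "addable (Y p) (t, j)"
  then have h': "(t, j) \<notin> Y p" "1 \<le> t" "1 \<le> j" "t = 1 \<or> (t - 1, j) \<in> Y p" "j = 1 \<or> (t, j - 1) \<in> Y p"
    using addable_iff[OF young_Y[OF assms], of t j] by auto
  have "j = lam p t + 1" using h' by (auto simp: Y_iff)
  moreover have "t = 1 \<or> lam p t < lam p (t - 1)" using h' \<open>j = lam p t + 1\<close> by (auto simp: Y_iff)
  ultimately show "1 \<le> t \<and> j = lam p t + 1 \<and> (t = 1 \<or> lam p t < lam p (t - 1))" using h' by simp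
next
  assume h: "1 \<le> t \<and> j = lam p t + 1 \<and> (t = 1 \<or> lam p t < lam p (t - 1))"
  show "addable (Y p) (t, j)"
    unfolding addable_iff[OF young_Y[OF assms]] Y_iff using h by auto
qed

lemma alternation:
  assumes ip: "in_P r p" and kp: "kappa r p > 0"
    and c1: "c1 \<in> HCs r p" and c2: "c2 \<in> HCs r p" and lt: "fst c1 < fst c2"
    and btw: "\<And>c. c \<in> HCs r p \<Longrightarrow> \<not> (fst c1 < fst c \<and> fst c < fst c2)"
  shows "odd (fst c2 - fst c1)"
proof -
  have part: "is_partition p" using ip by (simp add: in_P_def)
  have HCs: "HCs r p = AC r (Y p) \<union> RC r (Y p)" using HCs_full[OF ip kp] HC_eq[OF ip] by simp
  define cc where "cc t \<longleftrightarrow> (\<exists>c\<in>HCs r p. fst c = t)" for t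
  define e where "e t \<longleftrightarrow> cls r (t, lam p t)" for t
  have ccd: "cc t \<longleftrightarrow> (e t \<and> lam p (t + 1) < lam p t) \<or> (\<not> e t \<and> (t = 1 \<or> lam p t < lam p (t - 1)))" for t
  proof
    assume "cc t"
    then obtain j where "(t, j) \<in> AC r (Y p) \<union> RC r (Y p)" unfolding cc_def HCs by (metis Un_iff prod.collapse)
    then have "(addable (Y p) (t, j) \<or> removable (Y p) (t, j)) \<and> cls r (t, j)"
      by (auto simp: AC_def RC_def)
    then show "(e t \<and> lam p (t + 1) < lam p t) \<or> (\<not> e t \<and> (t = 1 \<or> lam p t < lam p (t - 1)))"
      unfolding add_Y[OF part] rem_Y[OF part] e_def using cls_Suc2 by auto
  next
    assume h: "(e t \<and> lam p (t + 1) < lam p t) \<or> (\<not> e t \<and> (t = 1 \<or> lam p t < lam p (t - 1)))"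
    show "cc t"
    proof (cases "e t")
      case True
      then have l: "lam p (t + 1) < lam p t" using h by simp
      have t1: "1 \<le> t" using l by (cases t) (auto simp: lam_def)
      have "removable (Y p) (t, lam p t)" unfolding rem_Y[OF part] using l t1 by simp
      then have "(t, lam p t) \<in> HCs r p" unfolding HCs using True by (simp add: RC_def e_def)
      then show ?thesis unfolding cc_def by force
    next
      case False
      then have l: "t = 1 \<or> lam p t < lam p (t - 1)" using h by simp
      have t1: "1 \<le> t" using l by (cases t) (auto simp: lam_def)
      have "addable (Y p) (t, lam p t + 1)" unfolding add_Y[OF part] using l t1 by simp
      moreover have "cls r (t, lam p t + 1)" using False cls_Suc2 by (simp add: e_def)
      ultimately have "(t, lam p t + 1) \<in> HCs r p" unfolding HCs by (simp add: AC_def)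
      then show ?thesis unfolding cc_def by force
    qed
  qed
  have t1: "1 \<le> fst c1" using c1 by (auto simp: HCs_def)
  show ?thesis
  proof (rule alt_abstract[of "lam p" e cc])
    show "\<And>t. 1 \<le> t \<Longrightarrow> lam p (t + 1) \<le> lam p t" using lam_mono[OF part] by simp
    show "\<And>t. lam p (t + 1) = lam p t \<Longrightarrow> e (t + 1) = (\<not> e t)" unfolding e_def using cls_Suc1 by simp
    show "\<And>t. cc t = (e t \<and> lam p (t + 1) < lam p t \<or> \<not> e t \<and> (t = 1 \<or> lam p t < lam p (t - 1)))"
      using ccd by blast
    show "1 \<le> fst c1" by (rule t1)
    show "fst c1 < fst c2" by (rule lt)
    show "cc (fst c1)" "cc (fst c2)" using c1 c2 unfolding cc_def by auto
    show "\<And>t. fst c1 < t \<Longrightarrow> t < fst c2 \<Longrightarrow> \<not> cc t" using btw unfolding cc_def by blast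
  qed
qed



definition consec :: "('a \<times> 'b) set \<Rightarrow> ('a::linorder \<times> 'b) \<Rightarrow> ('a \<times> 'b) \<Rightarrow> bool" where
  "consec X x y \<longleftrightarrow> x \<in> X \<and> y \<in> X \<and> fst x < fst y \<and> (\<forall>z\<in>X. \<not> (fst x < fst z \<and> fst z < fst y))"

definition good_match :: "(nat \<times> 'b) set \<Rightarrow> (nat \<times> 'b) set \<Rightarrow> (nat \<times> 'b) set set \<Rightarrow> bool" where
  "good_match X S M \<longleftrightarrow>
    (\<forall>P\<in>M. \<exists>x y. P = {x, y} \<and> x \<in> X \<and> y \<in> X \<and> fst x < fst y \<and> odd (fst y - fst x) \<and> card (P \<inter> S) = 1 \<and>
        (\<forall>z\<in>X. fst x \<le> fst z \<and> fst z \<le> fst y \<longrightarrow> (\<exists>w. w \<noteq> z \<and> {z, w} \<in> M \<and> fst x \<le> fst w \<and> fst w \<le> fst y))) \<and>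
    (\<forall>P\<in>M. \<forall>Q\<in>M. P \<noteq> Q \<longrightarrow> P \<inter> Q = {}) \<and> \<Union>M \<subseteq> X \<and> finite M"

lemma exists_mixed_consec:
  fixes X S :: "(nat \<times> 'b) set"
  assumes fin: "finite X" and inj: "inj_on fst X" and s: "s \<in> S" "s \<in> X" and u: "u \<in> X" "u \<notin> S"
  shows "\<exists>x y. consec X x y \<and> (x \<in> S \<longleftrightarrow> y \<notin> S)"
proof -
  define P0 where "P0 = {(a, b). a \<in> X \<and> b \<in> X \<and> fst a < fst b \<and> (a \<in> S \<longleftrightarrow> b \<notin> S)}"
  have fP: "finite P0" by (rule finite_subset[of _ "X \<times> X"]) (auto simp: P0_def fin)
  have "s \<noteq> u" using s u by auto
  then have "fst s \<noteq> fst u" using inj s u by (auto simp: inj_on_def)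
  then have "(s, u) \<in> P0 \<or> (u, s) \<in> P0" using s u unfolding P0_def by auto
  then have ne: "P0 \<noteq> {}" by auto
  define f where "f = (\<lambda>(a::nat \<times> 'b, b::nat \<times> 'b). fst b - fst a)"
  define d where "d = Min (f ` P0)"
  have "d \<in> f ` P0" unfolding d_def using fP ne by (intro Min_in) auto
  then obtain x y where xy: "(x, y) \<in> P0" "f (x, y) = d" by auto
  have mn: "\<And>a b. (a, b) \<in> P0 \<Longrightarrow> d \<le> f (a, b)" unfolding d_def using fP by (intro Min_le) auto
  have "consec X x y"
    unfolding consec_def
  proof (intro conjI ballI notI)
    show "x \<in> X" "y \<in> X" "fst x < fst y" using xy by (auto simp: P0_def)
    fix z assume z: "z \<in> X" "fst x < fst z \<and> fst z < fst y"
    show False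
    proof (cases "z \<in> S \<longleftrightarrow> x \<in> S")
      case True
      then have "(z, y) \<in> P0" using xy z by (auto simp: P0_def)
      then have "d \<le> fst y - fst z" using mn by (auto simp: f_def)
      then show False using xy z by (auto simp: f_def)
    next
      case False
      then have "(x, z) \<in> P0" using xy z by (auto simp: P0_def)
      then have "d \<le> fst z - fst x" using mn by (auto simp: f_def)
      then show False using xy z by (auto simp: f_def)
    qed
  qed
  moreover have "x \<in> S \<longleftrightarrow> y \<notin> S" using xy(1) unfolding P0_def by blast
  ultimately show ?thesis by blast
qed

lemma consec_between:
  assumes inj: "inj_on fst X" and c: "consec X x y" and z: "z \<in> X" "fst x \<le> fst z" "fst z \<le> fst y"
  shows "z = x \<or> z = y"
proof -
  have "fst z = fst x \<or> fst z = fst y" using c z unfolding consec_def by force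
  then show ?thesis using inj c z unfolding consec_def inj_on_def by metis
qed

lemma inj_fst_neq: "inj_on fst X \<Longrightarrow> a \<in> X \<Longrightarrow> b \<in> X \<Longrightarrow> a \<noteq> b \<Longrightarrow> fst a \<noteq> fst b"
  by (metis inj_on_def)

lemma gmD:
  assumes "good_match X S M" "P \<in> M"
  shows "\<exists>x y. P = {x, y} \<and> x \<in> X \<and> y \<in> X \<and> fst x < fst y \<and> odd (fst y - fst x) \<and> card (P \<inter> S) = 1 \<and>
        (\<forall>z\<in>X. fst x \<le> fst z \<and> fst z \<le> fst y \<longrightarrow> (\<exists>w. w \<noteq> z \<and> {z, w} \<in> M \<and> fst x \<le> fst w \<and> fst w \<le> fst y))"
  using assms unfolding good_match_def by blast

lemma matching:
  fixes X S :: "(nat \<times> 'b) set"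
  assumes "finite X" "inj_on fst X" "S \<subseteq> X" "2 * card S \<le> card X"
    and "\<And>x y. consec X x y \<Longrightarrow> odd (fst y - fst x)"
  shows "\<exists>M. good_match X S M \<and> card (X - \<Union>M) = card X - 2 * card S"
  using assms
proof (induction "card S" arbitrary: X S)
  case 0
  then have "S = {}" using finite_subset[OF "0.prems"(3) "0.prems"(1)] by simp
  then show ?case by (intro exI[of _ "{}"]) (simp add: good_match_def)
next
  case (Suc n)
  note fin = Suc.prems(1) and inj = Suc.prems(2) and SX = Suc.prems(3) and cardle = Suc.prems(4)
    and alt = Suc.prems(5)
  have fS: "finite S" using finite_subset[OF SX fin] .
  have "S \<noteq> {}" using Suc.hyps(2) by auto
  then obtain s where s: "s \<in> S" by blast
  have "card S < card X" using cardle Suc.hyps(2) by simp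
  then have "\<not> X \<subseteq> S"
  proof (intro notI)
    assume "X \<subseteq> S"
    then have "card X \<le> card S" by (rule card_mono[OF fS])
    then show False using \<open>card S < card X\<close> by simp
  qed
  then obtain u where u: "u \<in> X" "u \<notin> S" by auto
  obtain x y where xy: "consec X x y" "x \<in> S \<longleftrightarrow> y \<notin> S"
    using exists_mixed_consec[OF fin inj s SX[THEN subsetD, OF s] u] by blast
  have xX: "x \<in> X" "y \<in> X" "fst x < fst y" using xy(1) by (auto simp: consec_def)
  have xny: "x \<noteq> y" using xX by auto
  define X' where "X' = X - {x, y}"
  define S' where "S' = S - {x, y}"
  have cS': "card S' = n"
  proof -
    have "S \<inter> {x, y} = {x} \<or> S \<inter> {x, y} = {y}" using xy(2) by auto
    then have "card (S \<inter> {x,y}) = 1" by auto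
    moreover have "card S' = card S - card (S \<inter> {x,y})" unfolding S'_def
      using card_Diff_subset_Int[of S "{x,y}"] fS by simp
    ultimately show ?thesis using Suc.hyps(2) by simp
  qed
  have cX': "card X' = card X - 2" unfolding X'_def using xX xny fin by (simp add: card_Diff_subset)
  have fin': "finite X'" using fin by (simp add: X'_def)
  have inj': "inj_on fst X'" using inj by (auto simp: X'_def inj_on_def)
  have SX': "S' \<subseteq> X'" using SX by (auto simp: S'_def X'_def)
  have cardle': "2 * card S' \<le> card X'" using cardle cS' cX' Suc.hyps(2) by simp
  have nb: "\<And>z. z \<in> X \<Longrightarrow> \<not> (fst x < fst z \<and> fst z < fst y)" using xy(1) by (auto simp: consec_def)
  have after_y: "fst y \<le> fst z" if "z \<in> X" "fst x < fst z" for z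
  proof -
    have "\<not> fst z < fst y" using nb[OF that(1)] that(2) by blast
    then show ?thesis by simp
  qed
  have before_x: "fst z \<le> fst x" if "z \<in> X" "fst z < fst y" for z
  proof -
    have "\<not> fst x < fst z" using nb[OF that(1)] that(2) by blast
    then show ?thesis by simp
  qed
  have alt': "odd (fst b - fst a)" if ab: "consec X' a b" for a b
  proof -
    have aX: "a \<in> X" "b \<in> X" "a \<noteq> x" "a \<noteq> y" "b \<noteq> x" "b \<noteq> y" "fst a < fst b"
      using ab by (auto simp: consec_def X'_def)
    have nb': "\<And>z. z \<in> X' \<Longrightarrow> \<not> (fst a < fst z \<and> fst z < fst b)" using ab by (auto simp: consec_def)
    show ?thesis
    proof (cases "fst a < fst x \<and> fst x < fst b \<or> fst a < fst y \<and> fst y < fst b")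
      case False
      have "consec X a b"
        unfolding consec_def
      proof (intro conjI ballI notI)
        fix z assume z: "z \<in> X" "fst a < fst z \<and> fst z < fst b"
        then have "z = x \<or> z = y" using nb'[of z] by (auto simp: X'_def)
        then show False using False z by auto
      qed (use aX in auto)
      then show ?thesis by (rule alt)
    next
      case True
      have fx: "fst a < fst x" "fst y < fst b"
      proof -
        have "fst a \<noteq> fst x" "fst b \<noteq> fst y" "fst a \<noteq> fst y" "fst b \<noteq> fst x"
          using inj_fst_neq[OF inj] aX xX by auto
        then show "fst a < fst x" "fst y < fst b"
          using True after_y[OF aX(2)] before_x[OF aX(1)] xX by force+
      qed
      have c1: "consec X a x"
        unfolding consec_def
      proof (intro conjI ballI notI)
        fix z assume z: "z \<in> X" "fst a < fst z \<and> fst z < fst x"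
        then have zX: "z \<in> X'" using xX by (auto simp: X'_def)
        have "fst a < fst z \<and> fst z < fst b" using z fx xX by auto
        then show False using nb' zX by blast
      qed (use aX xX fx in auto)
      have c2: "consec X y b"
        unfolding consec_def
      proof (intro conjI ballI notI)
        fix z assume z: "z \<in> X" "fst y < fst z \<and> fst z < fst b"
        then have zX: "z \<in> X'" using xX by (auto simp: X'_def)
        have "fst a < fst z \<and> fst z < fst b" using z fx xX by auto
        then show False using nb' zX by blast
      qed (use aX xX fx in auto)
      have "odd (fst x - fst a)" "odd (fst y - fst x)" "odd (fst b - fst y)"
        using alt[OF c1] alt[OF xy(1)] alt[OF c2] by auto
      then show ?thesis using fx xX by presburger
    qed
  qed
  obtain M' where M': "good_match X' S' M'" "card (X' - \<Union>M') = card X' - 2 * card S'"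
    using Suc.hyps(1)[OF cS'[symmetric] fin' inj' SX' cardle' alt'] by blast
  define M where "M = insert {x, y} M'"
  have UM': "\<Union>M' \<subseteq> X'" using M'(1) by (simp add: good_match_def)
  have xyM': "{x, y} \<notin> M'" using UM' by (auto simp: X'_def)
  have gm: "good_match X S M"
    unfolding good_match_def
  proof (intro conjI)
    show "\<forall>P\<in>M. \<exists>a b. P = {a, b} \<and> a \<in> X \<and> b \<in> X \<and> fst a < fst b \<and> odd (fst b - fst a) \<and> card (P \<inter> S) = 1 \<and>
        (\<forall>z\<in>X. fst a \<le> fst z \<and> fst z \<le> fst b \<longrightarrow> (\<exists>w. w \<noteq> z \<and> {z, w} \<in> M \<and> fst a \<le> fst w \<and> fst w \<le> fst b))"
    proof
      fix P assume P: "P \<in> M"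
      show "\<exists>a b. P = {a, b} \<and> a \<in> X \<and> b \<in> X \<and> fst a < fst b \<and> odd (fst b - fst a) \<and> card (P \<inter> S) = 1 \<and>
        (\<forall>z\<in>X. fst a \<le> fst z \<and> fst z \<le> fst b \<longrightarrow> (\<exists>w. w \<noteq> z \<and> {z, w} \<in> M \<and> fst a \<le> fst w \<and> fst w \<le> fst b))"
      proof (cases "P = {x, y}")
        case True
        have "{x, y} \<inter> S = {x} \<or> {x, y} \<inter> S = {y}" using xy(2) by auto
        then have cP: "card (P \<inter> S) = 1" using True by auto
        have iv: "\<forall>z\<in>X. fst x \<le> fst z \<and> fst z \<le> fst y \<longrightarrow> (\<exists>w. w \<noteq> z \<and> {z, w} \<in> M \<and> fst x \<le> fst w \<and> fst w \<le> fst y)"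
        proof (intro ballI impI)
          fix z assume z: "z \<in> X" "fst x \<le> fst z \<and> fst z \<le> fst y"
          then have "z = x \<or> z = y" using consec_between[OF inj xy(1)] by auto
          then show "\<exists>w. w \<noteq> z \<and> {z, w} \<in> M \<and> fst x \<le> fst w \<and> fst w \<le> fst y"
          proof
            assume "z = x" then show ?thesis using xny xX by (intro exI[of _ y]) (auto simp: M_def)
          next
            assume "z = y" then show ?thesis using xny xX by (intro exI[of _ x]) (auto simp: M_def insert_commute)
          qed
        qed
        show ?thesis using True xX cP iv alt[OF xy(1)] by blast
      next
        case False
        then have PM': "P \<in> M'" using P by (simp add: M_def)
        then obtain a b where ab: "P = {a, b}" "a \<in> X'" "b \<in> X'" "fst a < fst b" "odd (fst b - fst a)"
          "card (P \<inter> S') = 1"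
          "\<forall>z\<in>X'. fst a \<le> fst z \<and> fst z \<le> fst b \<longrightarrow> (\<exists>w. w \<noteq> z \<and> {z, w} \<in> M' \<and> fst a \<le> fst w \<and> fst w \<le> fst b)"
          using gmD[OF M'(1) PM'] by blast
        have "P \<inter> S = P \<inter> S'" using ab(1-3) by (auto simp: S'_def X'_def)
        then have cP: "card (P \<inter> S) = 1" using ab(6) by simp
        have aX: "a \<in> X" "b \<in> X" "a \<noteq> x" "a \<noteq> y" "b \<noteq> x" "b \<noteq> y" using ab by (auto simp: X'_def)
        have iv: "\<forall>z\<in>X. fst a \<le> fst z \<and> fst z \<le> fst b \<longrightarrow> (\<exists>w. w \<noteq> z \<and> {z, w} \<in> M \<and> fst a \<le> fst w \<and> fst w \<le> fst b)"
        proof (intro ballI impI)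
          fix z assume z: "z \<in> X" "fst a \<le> fst z \<and> fst z \<le> fst b"
          show "\<exists>w. w \<noteq> z \<and> {z, w} \<in> M \<and> fst a \<le> fst w \<and> fst w \<le> fst b"
          proof (cases "z \<in> X'")
            case True
            then obtain w where w: "w \<noteq> z" "{z, w} \<in> M'" "fst a \<le> fst w" "fst w \<le> fst b"
              using ab(7) z by blast
            show ?thesis using w by (intro exI[of _ w]) (simp add: M_def)
          next
            case False
            then have zz: "z = x \<or> z = y" using z by (auto simp: X'_def)
            have neq: "fst a \<noteq> fst x" "fst b \<noteq> fst y" "fst a \<noteq> fst y" "fst b \<noteq> fst x"
              using inj_fst_neq[OF inj] aX xX by auto
            show ?thesis
            proof (cases "z = x")
              case True
              then have "fst a < fst x" "fst x < fst b" using z neq by auto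
              then have "fst y \<le> fst b" using after_y[OF aX(2)] by simp
              then show ?thesis using True xny xX \<open>fst a < fst x\<close> by (intro exI[of _ y]) (auto simp: M_def)
            next
              case False
              then have zy: "z = y" using zz by simp
              then have "fst a < fst y" "fst y < fst b" using z neq by auto
              then have "fst a \<le> fst x" using before_x[OF aX(1)] by simp
              then show ?thesis using zy xny xX \<open>fst y < fst b\<close> by (intro exI[of _ x]) (auto simp: M_def insert_commute)
            qed
          qed
        qed
        show ?thesis using ab(1,4,5) aX(1,2) cP iv by blast
      qed
    qed
    show "\<forall>P\<in>M. \<forall>Q\<in>M. P \<noteq> Q \<longrightarrow> P \<inter> Q = {}"
    proof (intro ballI impI)
      fix P Q assume PQ: "P \<in> M" "Q \<in> M" "P \<noteq> Q"
      have dis: "\<And>R. R \<in> M' \<Longrightarrow> {x, y} \<inter> R = {}" using UM' by (auto simp: X'_def)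
      show "P \<inter> Q = {}"
      proof (cases "P = {x, y}")
        case True
        then show ?thesis using PQ dis by (auto simp: M_def)
      next
        case False
        then have "P \<in> M'" using PQ by (simp add: M_def)
        show ?thesis
        proof (cases "Q = {x, y}")
          case True then show ?thesis using \<open>P \<in> M'\<close> dis by auto
        next
          case False
          then have "Q \<in> M'" using PQ by (simp add: M_def)
          then show ?thesis using \<open>P \<in> M'\<close> PQ(3) M'(1) unfolding good_match_def by blast
        qed
      qed
    qed
    show "\<Union>M \<subseteq> X" using UM' xX by (auto simp: M_def X'_def)
    show "finite M" using M'(1) by (simp add: M_def good_match_def)
  qed
  have "X - \<Union>M = X' - \<Union>M'" by (auto simp: M_def X'_def)
  then have "card (X - \<Union>M) = card X - 2 * card S" using M'(2) cX' cS' Suc.hyps(2) by simp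
  then show ?case using gm by blast
qed



lemma HCs_corner:
  assumes "c \<in> HCs r p"
  shows "corner (Y p) c \<and> cls r c \<and> 1 \<le> fst c"
  using assms unfolding HCs_def corner_def cls_def addrem_eq by auto

lemma HCs_inj:
  assumes ip: "in_P r p" and c1: "c1 \<in> HCs r p" and c2: "c2 \<in> HCs r p" and eq: "fst c1 = fst c2"
  shows "c1 = c2"
proof (rule ccontr)
  assume ne: "c1 \<noteq> c2"
  have yp: "young (Y p)" using inP_inv[OF ip] by simp
  obtain t j where t1: "c1 = (t, j)" by (cases c1)
  obtain j' where t2: "c2 = (t, j')" using eq t1 by (cases c2) auto
  have h1: "corner (Y p) (t, j)" "cls r (t, j)" using HCs_corner[OF c1] t1 by auto
  have h2: "corner (Y p) (t, j')" "cls r (t, j')" using HCs_corner[OF c2] t2 by auto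
  have "j < j' \<or> j' < j" using ne t1 t2 by auto
  then show False
  proof
    assume "j < j'" then show False using same_row[OF yp h1(1) h2(1) h1(2) h2(2)] by simp
  next
    assume "j' < j" then show False using same_row[OF yp h2(1) h1(1) h2(2) h1(2)] by simp
  qed
qed

lemma HCs_col:
  assumes ip: "in_P r p" and c1: "c1 \<in> HCs r p" and c2: "c2 \<in> HCs r p" and le: "fst c1 \<le> fst c2"
  shows "snd c2 \<le> snd c1"
proof (cases "fst c1 = fst c2")
  case True then show ?thesis using HCs_inj[OF ip c1 c2] by simp
next
  case False
  have yp: "young (Y p)" using inP_inv[OF ip] by simp
  have h: "corner (Y p) (fst c1, snd c1)" "corner (Y p) (fst c2, snd c2)"
    using HCs_corner[OF c1] HCs_corner[OF c2] by auto
  have "fst c1 < fst c2" using False le by simp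
  then show ?thesis using row_col[OF yp h(1) h(2)] by simp
qed

theorem mainTheorem2:
  fixes r :: nat and p :: "nat list" and S :: "square set"
  assumes "in_P r p"
    and "S \<subseteq> HCs r p"
    and "finite S"
    and "card S = kappa r p"
  shows "\<exists>\<sigma>. cycle_structure_set r p \<sigma> \<and> (\<forall>P\<in>\<sigma>. card (P \<inter> S) = 1)"
proof -
  note ip = assms(1)
  have fin: "finite (HCs r p)" using finite_HCs[OF ip] .
  have cH: "card (HCs r p) = gamma r p + 2 * kappa r p" using card_HCs[OF ip] .
  show ?thesis
  proof (cases "kappa r p = 0")
    case True
    have "cycle_structure_set r p {}"
      unfolding cycle_structure_set_def using cH True by simp
    then show ?thesis by blast
  next
    case False
    then have kp: "kappa r p > 0" by simp
    have inj: "inj_on fst (HCs r p)" using HCs_inj[OF ip] by (auto simp: inj_on_def)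
    have alt: "odd (fst y - fst x)" if "consec (HCs r p) x y" for x y
      using alternation[OF ip kp, of x y] that unfolding consec_def by blast
    have le: "2 * card S \<le> card (HCs r p)" using cH assms(4) by simp
    obtain M where M: "good_match (HCs r p) S M" "card (HCs r p - \<Union>M) = card (HCs r p) - 2 * card S"
      using matching[OF fin inj assms(2) le alt] by blast
    have UM: "\<Union>M \<subseteq> HCs r p" using M(1) by (simp add: good_match_def)
    have c1: "\<forall>P\<in>M. \<exists>a b. P = {a, b} \<and> a \<in> Hs r p \<and> b \<in> Cs r p"
    proof
      fix P assume P: "P \<in> M"
      obtain x y where xy: "P = {x, y}" "x \<in> HCs r p" "y \<in> HCs r p" "fst x < fst y" "odd (fst y - fst x)"
        using gmD[OF M(1) P] by blast
      show "\<exists>a b. P = {a, b} \<and> a \<in> Hs r p \<and> b \<in> Cs r p"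
      proof (cases "even (fst x)")
        case True
        then have "odd (fst y)" using xy(4,5) by presburger
        then show ?thesis using xy True by (intro exI[of _ x] exI[of _ y]) (simp add: Hs_def Cs_def)
      next
        case False
        then have "even (fst y)" using xy(4,5) by presburger
        then show ?thesis using xy False by (intro exI[of _ y] exI[of _ x]) (auto simp: Hs_def Cs_def)
      qed
    qed
    have c2: "\<forall>P\<in>M. \<forall>Q\<in>M. P \<noteq> Q \<longrightarrow> P \<inter> Q = {}" using M(1) by (simp add: good_match_def)
    have c3: "card (HCs r p - \<Union>M) = gamma r p" using M(2) cH assms(4) by simp
    have c4: "\<forall>a b. {a, b} \<in> M \<longrightarrow>
        (\<forall>c\<in>HCs r p. between c a b \<longrightarrow> (\<exists>d. d \<noteq> c \<and> {c, d} \<in> M \<and> between d a b))"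
    proof (intro allI impI ballI)
      fix a b c assume ab: "{a, b} \<in> M" and c: "c \<in> HCs r p" and bt: "between c a b"
      obtain x y where xy: "{a, b} = {x, y}" "x \<in> HCs r p" "y \<in> HCs r p" "fst x < fst y"
        "\<forall>z\<in>HCs r p. fst x \<le> fst z \<and> fst z \<le> fst y \<longrightarrow> (\<exists>w. w \<noteq> z \<and> {z, w} \<in> M \<and> fst x \<le> fst w \<and> fst w \<le> fst y)"
        using gmD[OF M(1) ab] by blast
      have abxy: "(a = x \<and> b = y) \<or> (a = y \<and> b = x)" using xy(1) by (auto simp: doubleton_eq_iff)
      have "fst x \<le> fst c \<and> fst c \<le> fst y" using bt abxy xy(4) unfolding between_def by auto
      then obtain w where w: "w \<noteq> c" "{c, w} \<in> M" "fst x \<le> fst w" "fst w \<le> fst y"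
        using xy(5) c by blast
      have wH: "w \<in> HCs r p" using w(2) UM by blast
      have "snd w \<le> snd x" using HCs_col[OF ip xy(2) wH w(3)] .
      moreover have "snd y \<le> snd w" using HCs_col[OF ip wH xy(3) w(4)] .
      ultimately have "between w a b" using abxy w(3,4) unfolding between_def by auto
      then show "\<exists>d. d \<noteq> c \<and> {c, d} \<in> M \<and> between d a b" using w by blast
    qed
    have c5: "\<forall>P\<in>M. card (P \<inter> S) = 1" using M(1) unfolding good_match_def by blast
    have "cycle_structure_set r p M" unfolding cycle_structure_set_def using c1 c2 c3 c4 by blast
    then show ?thesis using c5 by blast
  qed
qed

end
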